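(* Let $k\ge 2$ be an integer. For $n\ge 1$ let \[E_{n,k}=\frac{1}{k^n}\sum_{i=1}^n i\cdot \mathrm{IB}_k(n,i),\] the expected width of the largest BP-factorization of a uniformly random length-$n$ word over $\Sigma_k$, where $\mathrm{IB}_k(n,i)$ is the number of length-$n$ words over $\Sigma_k$ whose largest BP-factorization has width $i$. Then the limit $E_k=\lim_{n\to\infty}E_{n,k}$ exists.
   Context: $\Sigma_k=\{0,1,\ldots,k-1\}$. A block palindrome factorization (BP-factorization) of a word $w$ is a factorization $w=w_m\cdots w_1w_0w_1\cdots w_m$ with $m\ge 0$, $w_0$ a possibly empty word and $w_1,\dots,w_m$ non-empty words. Its width is $2m+1$ if $w_0$ is non-empty and $2m$ if $w_0$ is empty. A largest BP-factorization of $w$ is a BP-factorization of $w$ of maximum width. *)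

theory Defs
  imports "HOL-Analysis.Analysis"
begin

definition words :: "nat \<Rightarrow> nat \<Rightarrow> nat list set" where
  "words k n = {w. length w = n \<and> set w \<subseteq> {0..<k}}"

text \<open>A BP-factorization w = w_m ... w_1 w_0 w_1 ... w_m is encoded by the list
  ws = [w_1, ..., w_m] of non-empty blocks and the (possibly empty) centre w_0.\<close>

definition is_BP_fact :: "nat list \<Rightarrow> nat list list \<Rightarrow> nat list \<Rightarrow> bool" where
  "is_BP_fact w ws w0 \<longleftrightarrow>
     (\<forall>u\<in>set ws. u \<noteq> []) \<and> w = concat (rev ws) @ w0 @ concat ws"

definition BP_width :: "nat list list \<Rightarrow> nat list \<Rightarrow> nat" where
  "BP_width ws w0 = 2 * length ws + (if w0 \<noteq> [] then 1 else 0)"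

definition largest_BP_width :: "nat list \<Rightarrow> nat" where
  "largest_BP_width w = Max {BP_width ws w0 | ws w0. is_BP_fact w ws w0}"

definition IB :: "nat \<Rightarrow> nat \<Rightarrow> nat \<Rightarrow> nat" where
  "IB k n i = card {w \<in> words k n. largest_BP_width w = i}"

definition E :: "nat \<Rightarrow> nat \<Rightarrow> real" where
  "E n k = (1 / real k ^ n) * (\<Sum>i=1..n. real i * real (IB k n i))"

end

theory Submission
  imports Defs "HOL-Library.Sublist"
begin

definition unb :: "nat list \<Rightarrow> bool" where
  "unb u \<longleftrightarrow> u \<noteq> [] \<and> \<not> (\<exists>x. x \<noteq> [] \<and> length x < length u \<and> prefix x u \<and> suffix x u)"

lemma BP_snoc:
  "is_BP_fact w (ws @ [b]) w0 \<longleftrightarrow> b \<noteq> [] \<and> (\<exists>w'. w = b @ w' @ b \<and> is_BP_fact w' ws w0)"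
  unfolding is_BP_fact_def by auto

lemma BP_width_snoc: "BP_width (ws @ [b]) w0 = 2 + BP_width ws w0"
  unfolding BP_width_def by simp

lemma BP_nil: "is_BP_fact w [] w0 \<longleftrightarrow> w0 = w"
  unfolding is_BP_fact_def by auto

lemma width_le_length: "is_BP_fact w ws w0 \<Longrightarrow> BP_width ws w0 \<le> length w"
proof (induction ws arbitrary: w rule: rev_induct)
  case Nil
  then show ?case by (cases w) (auto simp: BP_nil BP_width_def)
next
  case (snoc b ws)
  then obtain w' where "b \<noteq> []" "w = b @ w' @ b" "is_BP_fact w' ws w0" by (auto simp: BP_snoc)
  with snoc.IH[of w'] show ?case by (cases b) (auto simp: BP_width_snoc)
qed

lemma lw_set_fin: "finite {BP_width ws w0 | ws w0. is_BP_fact w ws w0}"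
  by (rule finite_subset[of _ "{..length w}"]) (auto dest: width_le_length)

lemma lw_set_ne: "{BP_width ws w0 | ws w0. is_BP_fact w ws w0} \<noteq> {}"
  using BP_nil[of w w] by blast

lemma lw_ge: "is_BP_fact w ws w0 \<Longrightarrow> BP_width ws w0 \<le> largest_BP_width w"
  unfolding largest_BP_width_def by (rule Max_ge[OF lw_set_fin]) blast

lemma lw_ex: "\<exists>ws w0. is_BP_fact w ws w0 \<and> BP_width ws w0 = largest_BP_width w"
proof -
  have "largest_BP_width w \<in> {BP_width ws w0 | ws w0. is_BP_fact w ws w0}"
    unfolding largest_BP_width_def by (rule Max_in[OF lw_set_fin lw_set_ne])
  then show ?thesis by (smt (verit, del_insts) mem_Collect_eq)
qed

lemma lw_le_length: "largest_BP_width w \<le> length w"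
  using lw_ex[of w] width_le_length by metis

lemma lw_nil: "largest_BP_width [] = 0"
  using lw_le_length[of "[]"] by simp

lemma lw_pos: "w \<noteq> [] \<Longrightarrow> largest_BP_width w \<ge> 1"
  using lw_ge[of w "[]" w] by (simp add: BP_nil BP_width_def)

lemma exists_unb: "b \<noteq> [] \<Longrightarrow> w = b @ m @ b \<Longrightarrow> \<exists>u v. unb u \<and> w = u @ v @ u"
proof (induction "length b" arbitrary: b m rule: less_induct)
  case less
  show ?case
  proof (cases "unb b")
    case True
    then show ?thesis using less.prems by blast
  next
    case False
    then obtain x where x: "x \<noteq> []" "length x < length b" "prefix x b" "suffix x b"
      using less.prems unfolding unb_def by blast
    then obtain r r' where "b = x @ r" "b = r' @ x" unfolding prefix_def suffix_def by blast
    then have "w = x @ (r @ m @ r') @ x" using less.prems by (metis append.assoc)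
    then show ?thesis using less.hyps[OF x(2) x(1)] by blast
  qed
qed

lemma unb_unique:
  assumes "unb u1" "unb u2" "u1 @ v1 @ u1 = u2 @ v2 @ u2"
  shows "u1 = u2 \<and> v1 = v2"
proof -
  have key: "False" if "unb a" "unb c" "a @ p @ a = c @ q @ c" "length a < length c" for a c p q :: "nat list"
  proof -
    have "prefix a (a @ p @ a)" "prefix c (a @ p @ a)" using that(3) by (auto simp: prefix_def) (metis)
    then have "prefix a c" using prefix_length_prefix that(4) by fastforce
    have "suffix a (a @ p @ a)" "suffix c (a @ p @ a)" using that(3) by (auto simp: suffix_def) (metis append.assoc)
    then have "suffix a c" using suffix_length_suffix that(4) by fastforce
    then show False using \<open>prefix a c\<close> that unfolding unb_def by blast
  qed
  have "length u1 = length u2"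
    using key[OF assms(1,2,3)] key[OF assms(2,1) assms(3)[symmetric]] by (meson linorder_neqE_nat)
  then show ?thesis using assms(3) by auto
qed

lemma lw_none:
  assumes "w \<noteq> []" "\<not> (\<exists>u v. unb u \<and> w = u @ v @ u)"
  shows "largest_BP_width w = 1"
proof -
  have "BP_width ws w0 \<le> 1" if "is_BP_fact w ws w0" for ws w0
  proof (cases ws rule: rev_cases)
    case Nil
    then show ?thesis by (simp add: BP_width_def)
  next
    case (snoc ws' b)
    from that[unfolded snoc BP_snoc] obtain w' where "b \<noteq> []" "w = b @ w' @ b" by blast
    then show ?thesis using assms(2) exists_unb by blast
  qed
  then have "largest_BP_width w \<le> 1" using lw_ex by metis
  then show ?thesis using lw_pos[OF assms(1)] by simp
qed

lemma overlap_bordered: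
  assumes "u @ s = t @ u" "0 < length s" "length s < length u"
  shows "\<not> unb u"
proof -
  have lt: "length t = length s" using arg_cong[OF assms(1), of length] by simp
  have "take (length t) (u @ s) = t" using assms(1) by simp
  then have "take (length t) u = t" using lt assms(3) by simp
  define z where "z = drop (length t) u"
  have u1: "u = t @ z" using \<open>take (length t) u = t\<close> z_def by (metis append_take_drop_id)
  then have "z @ s = u" using assms(1) by simp
  have "z \<noteq> []" "length z < length u" using lt assms u1 by auto
  moreover have "prefix z u" using \<open>z @ s = u\<close> by (metis prefixI)
  moreover have "suffix z u" using u1 by (metis suffixI)
  ultimately show ?thesis unfolding unb_def by blast
qed

lemma long_border:
  assumes "u @ s = t @ u" "length s \<ge> length u"
  shows "\<exists>y. s = y @ u \<and> t = u @ y"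
proof -
  have lt: "length t = length s" using arg_cong[OF assms(1), of length] by simp
  have "take (length u) (t @ u) = u" using arg_cong[OF assms(1), of "take (length u)"] by simp
  then have "take (length u) t = u" using lt assms(2) by simp
  then have "t = u @ drop (length u) t" by (metis append_take_drop_id)
  then have "u @ s = u @ (drop (length u) t @ u)" using assms(1) by (metis append.assoc)
  then show ?thesis using \<open>t = _\<close> by blast
qed

lemma BP_snocI: "b \<noteq> [] \<Longrightarrow> is_BP_fact w' ws w0 \<Longrightarrow> is_BP_fact (b @ w' @ b) (ws @ [b]) w0"
  using BP_snoc by blast

lemma lw_unb:
  assumes "unb u"
  shows "largest_BP_width (u @ v @ u) = 2 + largest_BP_width v"
proof -
  let ?w = "u @ v @ u"
  have up: "u \<noteq> []" using assms unfolding unb_def by blast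
  have lower: "2 + largest_BP_width v \<le> largest_BP_width ?w"
  proof -
    obtain ws w0 where "is_BP_fact v ws w0" "BP_width ws w0 = largest_BP_width v" using lw_ex by blast
    then have "is_BP_fact ?w (ws @ [u]) w0" "BP_width (ws @ [u]) w0 = 2 + largest_BP_width v"
      using up BP_snocI BP_width_snoc by auto
    then show ?thesis using lw_ge by fastforce
  qed
  have "BP_width ws w0 \<le> 2 + largest_BP_width v" if f: "is_BP_fact ?w ws w0" for ws w0
  proof (cases ws rule: rev_cases)
    case Nil
    then show ?thesis by (simp add: BP_width_def)
  next
    case (snoc ws' b)
    from f[unfolded snoc BP_snoc] obtain w' where b: "b \<noteq> []" "?w = b @ w' @ b" "is_BP_fact w' ws' w0" by blast
    have wid: "BP_width ws w0 = 2 + BP_width ws' w0" using snoc by (simp add: BP_width_snoc)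
    have pb: "prefix b ?w" "prefix u ?w" by (rule prefixI[OF b(2)], simp)
    have "?w = (b @ w') @ b" using b(2) by simp
    then have sb1: "suffix b ?w" by (rule suffixI)
    have "suffix u ?w" by (rule suffixI[of _ "u @ v"]) simp
    note sb = sb1 this
    consider "length b < length u" | "length b = length u" | "length u < length b" by linarith
    then show ?thesis
    proof cases
      case 1
      then have "prefix b u" "suffix b u"
        using prefix_length_prefix[OF pb(1) pb(2)] suffix_length_suffix[OF sb(1) sb(2)] by simp_all
      then show ?thesis using assms b(1) 1 unfolding unb_def by blast
    next
      case 2
      then have "b = u" "w' = v" using b(2) by auto
      then show ?thesis using wid lw_ge[OF b(3)] by simp
    next
      case 3
      then have "prefix u b" "suffix u b"
        using prefix_length_prefix[OF pb(2) pb(1)] suffix_length_suffix[OF sb(2) sb(1)] by simp_all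
      then obtain s t where st: "b = u @ s" "b = t @ u" unfolding prefix_def suffix_def by blast
      have "0 < length s" using 3 st by simp
      have "length s \<ge> length u"
      proof (rule ccontr)
        assume "\<not> ?thesis"
        then show False using overlap_bordered[of u s t] st \<open>0 < length s\<close> assms by auto
      qed
      then obtain y where y: "s = y @ u" "t = u @ y" using long_border[of u s t] st by auto
      then have bu: "b = u @ y @ u" using st by simp
      then have "v = y @ u @ w' @ u @ y" using b(2) by simp
      show ?thesis
      proof (cases "y = []")
        case True
        then have "is_BP_fact v (ws' @ [u]) w0" using \<open>v = _\<close> b(3) up BP_snoc by simp
        then have "BP_width (ws' @ [u]) w0 \<le> largest_BP_width v" by (rule lw_ge)
        then show ?thesis using wid by (simp add: BP_width_snoc)
      next
        case False
        have "is_BP_fact (u @ w' @ u) (ws' @ [u]) w0" using b(3) up BP_snoc by simp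
        then have "is_BP_fact v ((ws' @ [u]) @ [y]) w0" using \<open>v = _\<close> False
          by (subst BP_snoc) simp
        then have "BP_width ((ws' @ [u]) @ [y]) w0 \<le> largest_BP_width v" by (rule lw_ge)
        moreover have "BP_width ((ws' @ [u]) @ [y]) w0 = 4 + BP_width ws' w0"
          by (simp only: BP_width_snoc)
        ultimately show ?thesis using wid by linarith
      qed
    qed
  qed
  then have "largest_BP_width ?w \<le> 2 + largest_BP_width v" using lw_ex by metis
  then show ?thesis using lower by simp
qed

definition U :: "nat \<Rightarrow> nat \<Rightarrow> nat list set" where
  "U k l = {u \<in> words k l. unb u}"

definition S :: "nat \<Rightarrow> nat \<Rightarrow> nat" where
  "S k n = (\<Sum>w\<in>words k n. largest_BP_width w)"

lemma words_alt: "words k n = {xs. set xs \<subseteq> {0..<k} \<and> length xs = n}"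
  unfolding words_def by auto

lemma finite_words: "finite (words k n)"
  unfolding words_alt by (rule finite_lists_length_eq) simp

lemma card_words: "card (words k n) = k ^ n"
  unfolding words_alt by (subst card_lists_length_eq) simp_all

lemma IB_sum: "(\<Sum>i=1..n. i * IB k n i) = S k n"
proof -
  have "S k n = (\<Sum>i\<in>{0..n}. \<Sum>w\<in>{w \<in> words k n. largest_BP_width w = i}. largest_BP_width w)"
    unfolding S_def
  proof (rule sum.group[symmetric])
    show "largest_BP_width ` words k n \<subseteq> {0..n}"
      using lw_le_length unfolding words_def by fastforce
  qed (simp_all add: finite_words)
  also have "\<dots> = (\<Sum>i\<in>{0..n}. i * IB k n i)"
    unfolding IB_def by (rule sum.cong) auto
  also have "\<dots> = (\<Sum>i=1..n. i * IB k n i)"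
    by (simp add: sum.atLeast_Suc_atMost)
  finally show ?thesis by simp
qed

lemma E_eq: "E n k = real (S k n) / real k ^ n"
proof -
  have "(\<Sum>i=1..n. real i * real (IB k n i)) = real (S k n)"
  proof -
    have "(\<Sum>i=1..n. real i * real (IB k n i)) = real (\<Sum>i=1..n. i * IB k n i)"
      by simp
    also have "\<dots> = real (S k n)" using IB_sum[where n=n and k=k] by simp
    finally show ?thesis .
  qed
  then show ?thesis unfolding E_def by simp
qed

lemma S_rec:
  assumes "n \<ge> 1"
  shows "S k n = k ^ n + (\<Sum>l=1..n div 2. card (U k l) * (k ^ (n - 2*l) + S k (n - 2*l)))"
proof -
  let ?W = "words k n"
  define D where "D l = (\<lambda>(u,v). u @ v @ u) ` (U k l \<times> words k (n - 2*l))" for l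
  define Dall where "Dall = (\<Union>l\<in>{1..n div 2}. D l)"
  have finD: "finite (D l)" for l unfolding D_def U_def
    by (intro finite_imageI finite_cartesian_product) (auto simp: finite_words)
  have inj: "inj_on (\<lambda>(u,v). u @ v @ u) (U k l \<times> words k (n - 2*l))" for l
    by (rule inj_onI) (auto simp: U_def dest: unb_unique)
  have sub: "Dall \<subseteq> ?W"
  proof
    fix w assume "w \<in> Dall"
    then obtain l u v where "l \<in> {1..n div 2}" "u \<in> U k l" "v \<in> words k (n - 2*l)" "w = u @ v @ u"
      unfolding Dall_def D_def by auto
    then show "w \<in> ?W" unfolding U_def words_def by auto
  qed
  have disj: "D l1 \<inter> D l2 = {}" if "l1 \<noteq> l2" for l1 l2
  proof -
    have F: False if "u1 \<in> U k l1" "u2 \<in> U k l2" "u1 @ v1 @ u1 = u2 @ v2 @ u2" for u1 u2 v1 v2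
      using that unb_unique[of u1 u2 v1 v2] \<open>l1 \<noteq> l2\<close> unfolding U_def words_def by auto
    show ?thesis
    proof (rule equals0I)
      fix w assume "w \<in> D l1 \<inter> D l2"
      then have w12: "w \<in> D l1" "w \<in> D l2" by auto
      obtain u1 v1 where 1: "u1 \<in> U k l1" "w = u1 @ v1 @ u1" using w12(1) unfolding D_def by auto
      obtain u2 v2 where 2: "u2 \<in> U k l2" "w = u2 @ v2 @ u2" using w12(2) unfolding D_def by auto
      show False using F[OF 1(1) 2(1), of v1 v2] 1(2) 2(2) by simp
    qed
  qed
  have rest: "largest_BP_width w = 1" if "w \<in> ?W - Dall" for w
  proof (rule lw_none)
    show "w \<noteq> []" using that assms unfolding words_def by auto
    show "\<not> (\<exists>u v. unb u \<and> w = u @ v @ u)"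
    proof
      assume "\<exists>u v. unb u \<and> w = u @ v @ u"
      then obtain u v where uv: "unb u" "w = u @ v @ u" by blast
      let ?l = "length u"
      have "u \<noteq> []" using uv unfolding unb_def by blast
      have len: "length w = n" "set w \<subseteq> {0..<k}" using that unfolding words_def by auto
      have "?l \<ge> 1" using \<open>u \<noteq> []\<close> by (cases u) auto
      then have "?l \<in> {1..n div 2}" using uv len by auto
      moreover have "u \<in> U k ?l" "v \<in> words k (n - 2 * ?l)"
        using uv len unfolding U_def words_def by auto
      ultimately have "(u, v) \<in> U k ?l \<times> words k (n - 2 * ?l)" by simp
      then have "w \<in> D ?l" unfolding D_def using uv(2) by (intro image_eqI[of _ _ "(u,v)"]) auto
      then have "w \<in> Dall" unfolding Dall_def using \<open>?l \<in> {1..n div 2}\<close> by blast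
      then show False using that by blast
    qed
  qed
  have cardD: "card (D l) = card (U k l) * k ^ (n - 2*l)" for l
    unfolding D_def by (simp add: card_image[OF inj] card_cartesian_product card_words)
  have sumD: "(\<Sum>w\<in>D l. largest_BP_width w) = card (U k l) * (2 * k ^ (n - 2*l) + S k (n - 2*l))" for l
  proof -
    have "(\<Sum>w\<in>D l. largest_BP_width w) = (\<Sum>(u,v)\<in>U k l \<times> words k (n - 2*l). largest_BP_width (u @ v @ u))"
      unfolding D_def by (subst sum.reindex[OF inj]) (simp add: case_prod_unfold)
    also have "\<dots> = (\<Sum>(u,v)\<in>U k l \<times> words k (n - 2*l). 2 + largest_BP_width v)"
      by (rule sum.cong) (auto simp: U_def lw_unb)
    also have "\<dots> = (\<Sum>u\<in>U k l. \<Sum>v\<in>words k (n - 2*l). 2 + largest_BP_width v)"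
      by (rule sum.cartesian_product[symmetric])
    also have "\<dots> = card (U k l) * (2 * k ^ (n - 2*l) + S k (n - 2*l))"
    proof -
      have "(\<Sum>v\<in>words k (n - 2*l). 2 + largest_BP_width v) =
            (\<Sum>v\<in>words k (n - 2*l). 2) + (\<Sum>v\<in>words k (n - 2*l). largest_BP_width v)"
        by (rule sum.distrib)
      also have "\<dots> = 2 * k ^ (n - 2*l) + S k (n - 2*l)"
        by (simp add: card_words S_def)
      finally show ?thesis by simp
    qed
    finally show ?thesis .
  qed
  have finW: "finite ?W" by (rule finite_words)
  have "S k n = (\<Sum>w\<in>?W - Dall. largest_BP_width w) + (\<Sum>w\<in>Dall. largest_BP_width w)"
    unfolding S_def by (rule sum.subset_diff[OF sub finW])
  also have "(\<Sum>w\<in>?W - Dall. largest_BP_width w) = card (?W - Dall)"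
  proof -
    have "(\<Sum>w\<in>?W - Dall. largest_BP_width w) = (\<Sum>w\<in>?W - Dall. 1)"
      by (rule sum.cong) (auto simp: rest)
    then show ?thesis by simp
  qed
  also have "card (?W - Dall) = k ^ n - card Dall"
    using card_Diff_subset[OF finite_subset[OF sub finW] sub] card_words by simp
  also have "card Dall = (\<Sum>l=1..n div 2. card (D l))"
    unfolding Dall_def by (rule card_UN_disjoint) (auto simp: finD disj)
  also have "(\<Sum>w\<in>Dall. largest_BP_width w) = (\<Sum>l=1..n div 2. \<Sum>w\<in>D l. largest_BP_width w)"
    unfolding Dall_def by (rule sum.UNION_disjoint) (auto simp: finD disj)
  finally have eq: "S k n = k ^ n - (\<Sum>l=1..n div 2. card (D l)) +
      (\<Sum>l=1..n div 2. card (U k l) * (2 * k ^ (n - 2*l) + S k (n - 2*l)))"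
    by (simp add: sumD)
  have le: "(\<Sum>l=1..n div 2. card (D l)) \<le> k ^ n"
  proof -
    have "card Dall \<le> k ^ n" using card_mono[OF finW sub] card_words by simp
    moreover have "card Dall = (\<Sum>l=1..n div 2. card (D l))"
      unfolding Dall_def by (rule card_UN_disjoint) (auto simp: finD disj)
    ultimately show ?thesis by simp
  qed
  have "(\<Sum>l=1..n div 2. card (U k l) * (2 * k ^ (n - 2*l) + S k (n - 2*l))) =
        (\<Sum>l=1..n div 2. card (D l)) + (\<Sum>l=1..n div 2. card (U k l) * (k ^ (n - 2*l) + S k (n - 2*l)))"
  proof -
    have "(\<Sum>l=1..n div 2. card (D l)) + (\<Sum>l=1..n div 2. card (U k l) * (k ^ (n - 2*l) + S k (n - 2*l)))
       = (\<Sum>l=1..n div 2. card (D l) + card (U k l) * (k ^ (n - 2*l) + S k (n - 2*l)))"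
      by (rule sum.distrib[symmetric])
    also have "\<dots> = (\<Sum>l=1..n div 2. card (U k l) * (2 * k ^ (n - 2*l) + S k (n - 2*l)))"
      by (rule sum.cong) (simp_all add: cardD algebra_simps)
    finally show ?thesis by simp
  qed
  then show ?thesis using eq le by simp
qed

lemma split_sum_nat:
  fixes f :: "nat \<Rightarrow> real"
  assumes "M \<le> h"
  shows "(\<Sum>l=1..h. f l) = (\<Sum>l=1..M. f l) + (\<Sum>l=Suc M..h. f l)"
  using sum.ub_add_nat[of 1 M f "h - M"] assms by simp

lemma renewal:
  fixes q x :: "nat \<Rightarrow> real" and \<rho> :: real
  assumes q0: "\<And>l. 0 \<le> q l" and part: "\<And>m. (\<Sum>l=1..m. q l) \<le> \<rho>" and rho: "\<rho> < 1"
    and rec: "\<And>n. n \<ge> 1 \<Longrightarrow> x n = 1 + (\<Sum>l=1..n div 2. q l * (1 + x (n - 2*l)))"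
  shows "convergent x"
proof -
  define Qs where "Qs m = (\<Sum>l=1..m. q l)" for m
  have rho0: "0 \<le> \<rho>" using part[of 0] by simp
  have Qs0: "0 \<le> Qs m" for m unfolding Qs_def by (rule sum_nonneg) (simp add: q0)
  have Qsr: "Qs m \<le> \<rho>" for m unfolding Qs_def by (rule part)
  have inc: "incseq Qs"
    unfolding incseq_def Qs_def by (auto intro!: sum_mono2 simp: q0)
  obtain Q where Qlim: "Qs \<longlonglongrightarrow> Q" and QsQ: "\<And>i. Qs i \<le> Q"
    using incseq_convergent[OF inc, of \<rho>] Qsr by blast
  have Qr: "Q \<le> \<rho>" by (rule LIMSEQ_le_const2[OF Qlim]) (simp add: Qsr)
  have Q0: "0 \<le> Q" using QsQ[of 0] Qs0[of 0] by simp
  have Q1: "Q < 1" using Qr rho by simp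
  define L where "L = (1 + Q) / (1 - Q)"
  have L1: "(1 - Q) * L = 1 + Q" unfolding L_def using Q1 by simp
  define d where "d n = x n - L" for n
  define e where "e h = 1 + Qs h - (1 - Qs h) * L" for h
  have drec: "d n = e (n div 2) + (\<Sum>l=1..n div 2. q l * d (n - 2*l))" if "n \<ge> 1" for n
  proof -
    let ?h = "n div 2"
    have "(\<Sum>l=1..?h. q l * (1 + x (n - 2*l))) = (\<Sum>l=1..?h. q l + q l * L + q l * d (n - 2*l))"
      by (rule sum.cong) (simp_all add: d_def algebra_simps)
    also have "\<dots> = Qs ?h + Qs ?h * L + (\<Sum>l=1..?h. q l * d (n - 2*l))"
      unfolding Qs_def by (simp add: sum.distrib sum_distrib_right)
    finally show ?thesis using rec[OF that] unfolding d_def e_def by (simp add: algebra_simps)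
  qed
  have dabs: "\<bar>d n\<bar> \<le> \<bar>e (n div 2)\<bar> + (\<Sum>l=1..n div 2. q l * \<bar>d (n - 2*l)\<bar>)" if "n \<ge> 1" for n
  proof -
    have "\<bar>(\<Sum>l=1..n div 2. q l * d (n - 2*l))\<bar> \<le> (\<Sum>l=1..n div 2. \<bar>q l * d (n - 2*l)\<bar>)"
      by (rule sum_abs)
    also have "\<dots> = (\<Sum>l=1..n div 2. q l * \<bar>d (n - 2*l)\<bar>)"
      by (rule sum.cong) (simp_all add: abs_mult q0)
    finally show ?thesis using drec[OF that] by linarith
  qed
  have elim: "e \<longlonglongrightarrow> 0"
  proof -
    have "e \<longlonglongrightarrow> 1 + Q - (1 - Q) * L"
      unfolding e_def by (intro tendsto_intros Qlim)
    then show ?thesis using L1 by simp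
  qed
  define Emax where "Emax = 2 + \<bar>L\<bar>"
  have ebound: "\<bar>e h\<bar> \<le> Emax" for h
  proof -
    have a: "0 \<le> Qs h" "Qs h \<le> 1" using Qs0[of h] Qsr[of h] rho by auto
    have "\<bar>(1 - Qs h) * L\<bar> \<le> \<bar>L\<bar>"
      using a by (simp add: abs_mult mult_left_le_one_le)
    then show ?thesis unfolding e_def Emax_def using a by linarith
  qed
  define D where "D = max \<bar>d 0\<bar> (Emax / (1 - \<rho>))"
  have D0: "0 \<le> D" unfolding D_def by simp
  have DE: "Emax + \<rho> * D \<le> D"
  proof -
    have "Emax \<le> (1 - \<rho>) * D" using rho unfolding D_def
      by (smt (verit, ccfv_SIG) divide_le_eq max.cobounded2 mult.commute)
    then show ?thesis by (simp add: algebra_simps)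
  qed
  have sum_le: "(\<Sum>l=1..h. q l * \<bar>d (n - 2*l)\<bar>) \<le> Qs h * B" if "\<And>l. l \<in> {1..h} \<Longrightarrow> \<bar>d (n - 2*l)\<bar> \<le> B" for h n B
  proof -
    have "(\<Sum>l=1..h. q l * \<bar>d (n - 2*l)\<bar>) \<le> (\<Sum>l=1..h. q l * B)"
      by (rule sum_mono) (simp add: mult_left_mono q0 that)
    also have "\<dots> = Qs h * B" unfolding Qs_def by (simp add: sum_distrib_right)
    finally show ?thesis .
  qed
  have dD: "\<bar>d n\<bar> \<le> D" for n
  proof (induction n rule: less_induct)
    case (less n)
    show ?case
    proof (cases "n = 0")
      case True
      then show ?thesis unfolding D_def by simp
    next
      case False
      then have n1: "n \<ge> 1" by simp
      have "(\<Sum>l=1..n div 2. q l * \<bar>d (n - 2*l)\<bar>) \<le> Qs (n div 2) * D"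
        by (rule sum_le) (rule less.IH, auto)
      also have "\<dots> \<le> \<rho> * D" using Qsr D0 by (simp add: mult_right_mono)
      finally show ?thesis using dabs[OF n1] ebound[of "n div 2"] DE by linarith
    qed
  qed
  have step: "\<exists>N'. \<forall>n\<ge>N'. \<bar>d n\<bar> \<le> \<rho> * B + \<epsilon>"
    if B0: "0 \<le> B" and eps: "0 < \<epsilon>" and N: "\<forall>n\<ge>N. \<bar>d n\<bar> \<le> B" for B \<epsilon> N
  proof -
    obtain H where H: "\<forall>h\<ge>H. \<bar>e h\<bar> < \<epsilon> / 2"
      using elim eps unfolding LIMSEQ_iff by (metis half_gt_zero diff_zero real_norm_def)
    have "\<epsilon> / (2 * (D + 1)) > 0" using eps D0 by simp
    then obtain M where M: "\<forall>m\<ge>M. \<bar>Qs m - Q\<bar> < \<epsilon> / (2 * (D + 1))"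
      using Qlim unfolding LIMSEQ_iff by (metis real_norm_def)
    have "\<forall>n\<ge>2*H + 2*M + N + 1. \<bar>d n\<bar> \<le> \<rho> * B + \<epsilon>"
    proof (intro allI impI)
      fix n assume n: "n \<ge> 2*H + 2*M + N + 1"
      let ?h = "n div 2"
      have hH: "?h \<ge> H" "?h \<ge> M" using n by auto
      have s1: "(\<Sum>l=1..M. q l * \<bar>d (n - 2*l)\<bar>) \<le> Qs M * B"
        by (rule sum_le) (use N n in auto)
      have s2: "(\<Sum>l=Suc M..?h. q l * \<bar>d (n - 2*l)\<bar>) \<le> (Qs ?h - Qs M) * D"
      proof -
        have "(\<Sum>l=Suc M..?h. q l * \<bar>d (n - 2*l)\<bar>) \<le> (\<Sum>l=Suc M..?h. q l * D)"
          by (rule sum_mono) (simp add: mult_left_mono q0 dD)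
        also have "\<dots> = (\<Sum>l=Suc M..?h. q l) * D" by (simp add: sum_distrib_right)
        also have "(\<Sum>l=Suc M..?h. q l) = Qs ?h - Qs M"
          unfolding Qs_def using split_sum_nat[OF hH(2), of q] by simp
        finally show ?thesis .
      qed
      have "(Qs ?h - Qs M) * D \<le> (Q - Qs M) * D"
        using QsQ D0 by (simp add: mult_right_mono)
      also have "\<dots> \<le> \<epsilon> / (2 * (D + 1)) * D"
        using M D0 QsQ[of M] by (intro mult_right_mono) auto
      also have "\<dots> \<le> \<epsilon> / 2"
        using eps D0 by (simp add: field_simps)
      finally have s2': "(Qs ?h - Qs M) * D \<le> \<epsilon> / 2" .
      have "Qs M * B \<le> \<rho> * B" using Qsr B0 by (simp add: mult_right_mono)
      moreover have "(\<Sum>l=1..?h. q l * \<bar>d (n - 2*l)\<bar>) =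
          (\<Sum>l=1..M. q l * \<bar>d (n - 2*l)\<bar>) + (\<Sum>l=Suc M..?h. q l * \<bar>d (n - 2*l)\<bar>)"
        by (rule split_sum_nat[OF hH(2)])
      moreover have "\<bar>e ?h\<bar> < \<epsilon> / 2" using H hH by simp
      moreover have "n \<ge> 1" using n by simp
      ultimately show "\<bar>d n\<bar> \<le> \<rho> * B + \<epsilon>" using dabs[of n] s1 s2 s2' by linarith
    qed
    then show ?thesis by blast
  qed
  have iter: "\<exists>N. \<forall>n\<ge>N. \<bar>d n\<bar> \<le> \<rho> ^ j * D + \<epsilon> / (1 - \<rho>)" if eps: "0 < \<epsilon>" for j \<epsilon>
  proof (induction j)
    case 0
    have "0 \<le> \<epsilon> / (1 - \<rho>)" using eps rho by simp
    then show ?case using dD by (metis add_increasing2 mult_1 power_0)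
  next
    case (Suc j)
    let ?B = "\<rho> ^ j * D + \<epsilon> / (1 - \<rho>)"
    have B0: "0 \<le> ?B" using eps rho rho0 D0 by simp
    obtain N' where "\<forall>n\<ge>N'. \<bar>d n\<bar> \<le> \<rho> * ?B + \<epsilon>"
      using step[OF B0 eps] Suc.IH by blast
    moreover have "\<rho> * ?B + \<epsilon> = \<rho> ^ Suc j * D + \<epsilon> / (1 - \<rho>)"
      using rho by (simp add: field_simps)
    ultimately show ?case by metis
  qed
  have "d \<longlonglongrightarrow> 0"
    unfolding LIMSEQ_iff
  proof (intro allI impI)
    fix r :: real assume r: "0 < r"
    have "r / (2 * (D + 1)) > 0" using r D0 by simp
    then obtain j where j: "\<bar>\<rho> ^ j\<bar> < r / (2 * (D + 1))"
      using LIMSEQ_power_zero[of \<rho>] rho rho0 unfolding LIMSEQ_iff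
      by (metis abs_of_nonneg diff_zero order_refl real_norm_def)
    define \<epsilon> where "\<epsilon> = r * (1 - \<rho>) / 4"
    have eps: "0 < \<epsilon>" unfolding \<epsilon>_def using r rho by simp
    have nz: "1 - \<rho> \<noteq> 0" using rho by simp
    have epsr: "\<epsilon> / (1 - \<rho>) = r / 4" unfolding \<epsilon>_def using nz by (simp add: field_simps)
    obtain N where N: "\<forall>n\<ge>N. \<bar>d n\<bar> \<le> \<rho> ^ j * D + \<epsilon> / (1 - \<rho>)" using iter[OF eps] by blast
    have "\<rho> ^ j * D \<le> r / (2 * (D + 1)) * D"
      using j D0 rho0 by (intro mult_right_mono) auto
    also have "\<dots> \<le> r / 2" using r D0 by (simp add: field_simps)
    finally have "\<rho> ^ j * D \<le> r / 2" .
    then have "\<forall>n\<ge>N. norm (d n - 0) < r" using N epsr r by fastforce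
    then show "\<exists>no. \<forall>n\<ge>no. norm (d n - 0) < r" by blast
  qed
  then have "(\<lambda>n. d n + L) \<longlonglongrightarrow> 0 + L" by (intro tendsto_intros)
  then have "x \<longlonglongrightarrow> L" unfolding d_def by simp
  then show ?thesis unfolding convergent_def by blast
qed


lemma geo_half: "(\<Sum>l=1..m. (1/2::real) ^ l) = 1 - (1/2) ^ m"
  by (induction m) (simp_all add: sum.cl_ivl_Suc)

lemma geo_le:
  fixes x :: real
  assumes "0 \<le> x" "x \<le> 1/2"
  shows "(\<Sum>l=1..m. x ^ l) \<le> 1"
proof -
  have "(\<Sum>l=1..m. x ^ l) \<le> (\<Sum>l=1..m. (1/2::real) ^ l)"
    by (rule sum_mono, rule power_mono) (use assms in auto)
  also have "\<dots> = 1 - (1/2) ^ m" by (rule geo_half)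
  also have "\<dots> \<le> 1" by simp
  finally show ?thesis .
qed

lemma card_U_le: "card (U k l) \<le> k ^ l"
  using card_mono[OF finite_words, of "U k l" k l] card_words unfolding U_def by auto

lemma card_U2: assumes "k \<ge> 1" shows "card (U k 2) \<le> k ^ 2 - 1"
proof -
  have mem: "[0,0] \<in> words k 2" using assms unfolding words_def by auto
  have "\<not> unb [0,0]" unfolding unb_def
    by (intro notI, elim conjE, erule notE, rule exI[of _ "[0]"]) (simp add: prefix_def suffix_def)
  then have "U k 2 \<subseteq> words k 2 - {[0,0]}" unfolding U_def by auto
  then have "card (U k 2) \<le> card (words k 2 - {[0,0]})"
    by (intro card_mono) (simp_all add: finite_words)
  also have "\<dots> = k ^ 2 - 1" using mem by (simp add: card_words finite_words)
  finally show ?thesis .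
qed

theorem theorem4:
  fixes k :: nat
  assumes "k \<ge> 2"
  shows "convergent (\<lambda>n. E n k)"
proof -
  define q where "q l = real (card (U k l)) / real k ^ (2*l)" for l
  define x where "x = 1 / real k"
  have kpos: "real k > 0" using assms by simp
  have x0: "0 < x" "x \<le> 1/2" unfolding x_def using assms by (auto simp: field_simps)
  have q0: "0 \<le> q l" for l unfolding q_def by simp
  have qle: "q l \<le> x ^ l" for l
  proof -
    have "q l \<le> real k ^ l / real k ^ (2*l)"
      unfolding q_def using card_U_le[of k l] kpos
      by (intro divide_right_mono) (simp_all add: of_nat_le_iff[symmetric])
    also have "\<dots> = x ^ l" unfolding x_def using kpos
      by (simp add: power_mult power2_eq_square power_mult_distrib field_simps)
    finally show ?thesis .
  qed
  have q2: "q 2 \<le> x ^ 2 - x ^ 4"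
  proof -
    have k1: "1 \<le> k ^ 2" using assms by simp
    have "card (U k 2) \<le> k ^ 2 - 1" by (rule card_U2) (use assms in simp)
    then have "real (card (U k 2)) \<le> real (k ^ 2 - 1)" by (simp only: of_nat_le_iff)
    also have "real (k ^ 2 - 1) = real k ^ 2 - 1" using k1 by (simp add: of_nat_diff)
    finally have c: "real (card (U k 2)) \<le> real k ^ 2 - 1" .
    have "q 2 = real (card (U k 2)) / real k ^ 4" unfolding q_def by simp
    also have "\<dots> \<le> (real k ^ 2 - 1) / real k ^ 4"
      using c kpos by (intro divide_right_mono) simp_all
    also have "\<dots> = x ^ 2 - x ^ 4" unfolding x_def using kpos
      by (simp add: field_simps)
    finally show ?thesis .
  qed
  define \<rho> where "\<rho> = 1 - x ^ 4"
  have part: "(\<Sum>l=1..m. q l) \<le> \<rho>" for m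
  proof (cases "m \<ge> 2")
    case True
    have "(\<Sum>l=1..m. q l) \<le> (\<Sum>l=1..m. x ^ l - (if l = 2 then x ^ 4 else 0))"
      by (rule sum_mono) (use qle q2 in auto)
    also have "\<dots> = (\<Sum>l=1..m. x ^ l) - x ^ 4"
      using True by (simp add: sum_subtractf)
    also have "\<dots> \<le> \<rho>" unfolding \<rho>_def using geo_le[of x m] x0 by simp
    finally show ?thesis .
  next
    case False
    then have "m = 0 \<or> m = 1" by auto
    moreover have "x ^ 4 \<le> 1/2"
    proof -
      have "x ^ 4 \<le> x ^ 1" by (rule power_decreasing) (use x0 in auto)
      then show ?thesis using x0 by simp
    qed
    ultimately show ?thesis unfolding \<rho>_def using qle[of 1] x0 by auto
  qed
  have rho: "\<rho> < 1" unfolding \<rho>_def using x0 by simp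
  have rec: "E n k = 1 + (\<Sum>l=1..n div 2. q l * (1 + E (n - 2*l) k))" if n1: "n \<ge> 1" for n
  proof -
    have "E n k = real (S k n) / real k ^ n" by (rule E_eq)
    also have "real (S k n) = real k ^ n +
        (\<Sum>l=1..n div 2. real (card (U k l)) * (real k ^ (n - 2*l) + real (S k (n - 2*l))))"
      unfolding S_rec[OF n1] by simp
    also have "\<dots> / real k ^ n = 1 + (\<Sum>l=1..n div 2.
        real (card (U k l)) * (real k ^ (n - 2*l) + real (S k (n - 2*l))) / real k ^ n)"
      using kpos by (simp add: add_divide_distrib sum_divide_distrib)
    also have "(\<Sum>l=1..n div 2.
        real (card (U k l)) * (real k ^ (n - 2*l) + real (S k (n - 2*l))) / real k ^ n) =
        (\<Sum>l=1..n div 2. q l * (1 + E (n - 2*l) k))"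
    proof (rule sum.cong)
      fix l assume l: "l \<in> {1..n div 2}"
      then have nn: "n = 2*l + (n - 2*l)" by auto
      have pk: "real k ^ n = real k ^ (2*l) * real k ^ (n - 2*l)"
        by (subst nn) (simp only: power_add)
      show "real (card (U k l)) * (real k ^ (n - 2*l) + real (S k (n - 2*l))) / real k ^ n =
          q l * (1 + E (n - 2*l) k)"
        unfolding q_def E_eq pk using kpos by (simp add: field_simps)
    qed simp
    finally show ?thesis .
  qed
  show ?thesis
    by (rule renewal[where q=q and \<rho>=\<rho>]) (use q0 part rho rec in auto)
qed

end
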